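(* Let $U^{*}$ denote the optimal value of the problem $$\max_{\{e^{\mathcal S}(t),\,t\ge 1\}} \ \bar U^{\mathcal S}=\lim_{\tau\to\infty}\frac1\tau\sum_{t=1}^{\tau}U(e^{\mathcal S}(t))$$ subject to $B(t)=\max\{0,\min\{M,\,B(t-1)+r(t)-e^{\mathcal S}(t-1)\}\}$ and $e^{\mathcal S}(t)\le B(t)$ for all $t$. Then $U^{*}\le U(\mu)$.
   Context: Time is discrete, $t=1,2,\dots$. A node has a battery of finite capacity $M$ (units of energy) with state $B(t)\in[0,M]$. The battery is replenished by a nonnegative ergodic stochastic process $\{r(t),t\ge1\}$ with long-term mean $\lim_{\tau\to\infty}\frac1\tau\sum_{t=1}^\tau r(t)=\mu$. A power allocation policy $\mathcal S$ draws energy $e^{\mathcal S}(t)\ge0$ from the battery at time $t$. The utility function $U$ is concave and non-decreasing on $[0,\infty)$; the maximization is over (ergodic) energy management policies. *)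

theory Defs
  imports "HOL-Analysis.Analysis"
begin

definition feasible_policy :: "real \<Rightarrow> (nat \<Rightarrow> real) \<Rightarrow> real \<Rightarrow> (nat \<Rightarrow> real) \<Rightarrow> bool" where
  "feasible_policy M r B0 e \<longleftrightarrow>
     (\<forall>t. 0 \<le> e t) \<and>
     (\<exists>B :: nat \<Rightarrow> real. B 0 = B0 \<and>
        (\<forall>t\<ge>1. B t = max 0 (min M (B (t - 1) + r t - e (t - 1)))) \<and>
        (\<forall>t\<ge>1. e t \<le> B t))"

definition avg_utility :: "(real \<Rightarrow> real) \<Rightarrow> (nat \<Rightarrow> real) \<Rightarrow> nat \<Rightarrow> real" where
  "avg_utility U e \<tau> = (\<Sum>t=1..\<tau>. U (e t)) / real \<tau>"

definition opt_value :: "real \<Rightarrow> (nat \<Rightarrow> real) \<Rightarrow> real \<Rightarrow> (real \<Rightarrow> real) \<Rightarrow> ereal" where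
  "opt_value M r B0 U =
     (SUP e \<in> {e. feasible_policy M r B0 e \<and> convergent (avg_utility U e)}.
        ereal (lim (avg_utility U e)))"

end

theory Submission
  imports Defs
begin

lemma energy_bound:
  fixes M B0 :: real and r e :: "nat \<Rightarrow> real"
  assumes feas: "feasible_policy M r B0 e" and M: "0 < M" and r: "\<And>t. 0 \<le> r t"
  shows "(\<Sum>t=1..n. e t) \<le> M + (\<Sum>t=1..Suc n. r t)"
proof -
  from feas obtain B where B1: "\<forall>t\<ge>1. B t = max 0 (min M (B (t - 1) + r t - e (t - 1)))"
    and B2: "\<forall>t\<ge>1. e t \<le> B t" unfolding feasible_policy_def by blast
  have Bnn: "0 \<le> B t \<and> B t \<le> M" if "t \<ge> 1" for t using B1 that M by auto
  have step: "B (Suc (Suc k)) \<le> B (Suc k) + r (Suc (Suc k)) - e (Suc k)" for k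
  proof -
    have "B (Suc k) - e (Suc k) \<ge> 0" using B2 by force
    then have "0 \<le> B (Suc k) + r (Suc (Suc k)) - e (Suc k)" using r[of "Suc (Suc k)"] by linarith
    moreover have "B (Suc (Suc k)) = max 0 (min M (B (Suc k) + r (Suc (Suc k)) - e (Suc k)))"
      using B1 by force
    ultimately show ?thesis using M by auto
  qed
  have main: "B (Suc n) + (\<Sum>t=1..n. e t) \<le> B 1 + (\<Sum>t=2..Suc n. r t)" for n
  proof (induction n)
    case 0 then show ?case by simp
  next
    case (Suc n)
    have "B (Suc (Suc n)) + (\<Sum>t=1..Suc n. e t) = B (Suc (Suc n)) + e (Suc n) + (\<Sum>t=1..n. e t)"
      by simp
    also have "\<dots> \<le> B (Suc n) + r (Suc (Suc n)) + (\<Sum>t=1..n. e t)" using step[of n] by linarith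
    also have "\<dots> \<le> B 1 + (\<Sum>t=2..Suc n. r t) + r (Suc (Suc n))" using Suc by linarith
    also have "\<dots> = B 1 + (\<Sum>t=2..Suc (Suc n). r t)" by simp
    finally show ?case .
  qed
  have "(\<Sum>t=2..Suc n. r t) \<le> (\<Sum>t=1..Suc n. r t)"
    by (rule sum_mono2) (use r in auto)
  moreover have "B 1 \<le> M" "0 \<le> B (Suc n)" using Bnn by auto
  ultimately show ?thesis using main[of n] by linarith
qed

lemma avg_bound:
  fixes M B0 :: real and r e :: "nat \<Rightarrow> real" and U :: "real \<Rightarrow> real"
  assumes feas: "feasible_policy M r B0 e" and M: "0 < M" and r: "\<And>t. 0 \<le> r t"
    and conc: "concave_on {0..} U" and mono: "mono_on {0..} U" and n: "n \<ge> 1"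
  shows "avg_utility U e n \<le> U ((M + (\<Sum>t=1..Suc n. r t)) / real n)"
proof -
  have e0: "\<And>t. 0 \<le> e t" using feas unfolding feasible_policy_def by blast
  have cv: "convex_on {0..} (\<lambda>x. - U x)" using conc unfolding concave_on_def .
  have "(\<lambda>x. - U x) (\<Sum>i\<in>{1..n}. (1 / real n) *\<^sub>R e i) \<le> (\<Sum>i\<in>{1..n}. (1 / real n) * (- U (e i)))"
    by (rule convex_on_sum[OF _ _ cv]) (use n e0 in auto)
  then have "(\<Sum>i\<in>{1..n}. U (e i)) / real n \<le> U ((\<Sum>i\<in>{1..n}. e i) / real n)"
    by (simp add: sum_distrib_left[symmetric] sum_distrib_right[symmetric] sum_negf sum_divide_distrib[symmetric] divide_inverse mult.commute)
  also have "\<dots> \<le> U ((M + (\<Sum>t=1..Suc n. r t)) / real n)"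
  proof (rule mono_onD[OF mono])
    show "(\<Sum>i\<in>{1..n}. e i) / real n \<in> {0..}" using e0 by (simp add: sum_nonneg)
    show "(M + (\<Sum>t=1..Suc n. r t)) / real n \<in> {0..}" using M r
      by (simp add: sum_nonneg add_nonneg_nonneg)
    show "(\<Sum>i\<in>{1..n}. e i) / real n \<le> (M + (\<Sum>t=1..Suc n. r t)) / real n"
      using energy_bound[OF feas M r, of n] by (simp add: divide_right_mono)
  qed
  finally show ?thesis unfolding avg_utility_def .
qed

theorem lemma1:
  fixes M B0 \<mu> :: real and r :: "nat \<Rightarrow> real" and U :: "real \<Rightarrow> real"
  assumes "0 < M" and "0 \<le> B0" and "B0 \<le> M"
    and "\<And>t. 0 \<le> r t"
    and "(\<lambda>\<tau>. (\<Sum>t=1..\<tau>. r t) / real \<tau>) \<longlonglongrightarrow> \<mu>"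
    and "concave_on {0..} U" and "mono_on {0..} U"
    and "continuous_on {0..} U"
  shows "opt_value M r B0 U \<le> ereal (U \<mu>)"
proof -
  let ?g = "\<lambda>n. (M + (\<Sum>t=1..Suc n. r t)) / real n"
  have mu0: "0 \<le> \<mu>"
    by (rule LIMSEQ_le_const[OF assms(5)]) (use assms(4) in \<open>auto intro!: sum_nonneg divide_nonneg_nonneg\<close>)
  have s1: "(\<lambda>n. (\<Sum>t=1..Suc n. r t) / real (Suc n)) \<longlonglongrightarrow> \<mu>"
    using LIMSEQ_Suc[OF assms(5)] by simp
  have s2: "(\<lambda>n. real (Suc n) / real n) \<longlonglongrightarrow> 1"
  proof -
    have "(\<lambda>n. 1 + 1 / real n) \<longlonglongrightarrow> 1 + 0"
      by (intro tendsto_add tendsto_const lim_const_over_n)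
    moreover have "eventually (\<lambda>n. 1 + 1 / real n = real (Suc n) / real n) sequentially"
      using eventually_gt_at_top[of "0::nat"] by eventually_elim (simp add: field_simps)
    ultimately show ?thesis using Lim_transform_eventually by fastforce
  qed
  have s3: "(\<lambda>n. M / real n) \<longlonglongrightarrow> 0" by (rule lim_const_over_n)
  have "(\<lambda>n. M / real n + ((\<Sum>t=1..Suc n. r t) / real (Suc n)) * (real (Suc n) / real n)) \<longlonglongrightarrow> 0 + \<mu> * 1"
    by (intro tendsto_add tendsto_mult s1 s2 s3)
  moreover have "(\<lambda>n. M / real n + ((\<Sum>t=1..Suc n. r t) / real (Suc n)) * (real (Suc n) / real n)) = ?g"
  proof
    fix n
    show "M / real n + ((\<Sum>t=1..Suc n. r t) / real (Suc n)) * (real (Suc n) / real n) = ?g n"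
      by (cases "n = 0") (simp_all only: add_divide_distrib, simp_all del: sum.atLeast_Suc_atMost_Suc_shift sum.cl_ivl_Suc)
  qed
  ultimately have gl: "?g \<longlonglongrightarrow> \<mu>" by simp
  have gnn: "\<forall>n. ?g n \<in> {0..}" using assms(1,4) by (simp add: sum_nonneg add_nonneg_nonneg)
  have Ul: "(\<lambda>n. U (?g n)) \<longlonglongrightarrow> U \<mu>"
    by (rule continuous_on_tendsto_compose[OF assms(8) gl]) (use mu0 gnn in auto)
  show ?thesis
    unfolding opt_value_def
  proof (rule SUP_least)
    fix e assume "e \<in> {e. feasible_policy M r B0 e \<and> convergent (avg_utility U e)}"
    then have f: "feasible_policy M r B0 e" and c: "convergent (avg_utility U e)" by auto
    have "lim (avg_utility U e) \<le> U \<mu>"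
    proof (rule LIMSEQ_le[OF convergent_LIMSEQ_iff[THEN iffD1, OF c] Ul])
      show "\<exists>N. \<forall>n\<ge>N. avg_utility U e n \<le> U (?g n)"
        using avg_bound[OF f assms(1,4,6,7)] by (intro exI[of _ 1]) auto
    qed
    then show "ereal (lim (avg_utility U e)) \<le> ereal (U \<mu>)" by simp
  qed
qed

end
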